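(* For all $n,k\in\mathbb Z$, $[x^ky^{n-k}](x+y)^n=\binom nk_{a,b;q,p}$. In particular, \[ (x+y)^n=\sum_{k\ge0}\binom nk_{a,b;q,p}x^ky^{n-k}\ \text{ in } \mathbb C_{a,b;q,p}[[x,y,y^{-1}]],\qquad (x+y)^n=\sum_{k\le n}\binom nk_{a,b;q,p}x^ky^{n-k}\ \text{ in } \mathbb C_{a,b;q,p}[[x,x^{-1},y]]. \]
   Context: Let $q,p\in\mathbb C$ with $|p|<1$. $\theta(x;p)=\prod_{j\ge0}(1-p^jx)(1-p^{j+1}/x)$, $\theta(x_1,\dots,x_\ell;p)=\prod_i\theta(x_i;p)$. Let $\mathbb E_{a,b;q,p}$ be the field of totally elliptic functions in $\log_qa,\log_qb$ (meromorphic, doubly periodic with equal periods $\sigma^{-1},\tau\sigma^{-1}$ where $q=e^{2\pi i\sigma},p=e^{2\pi i\tau}$). $\mathbb C_{a,b;q,p}[x,x^{-1},y,y^{-1}]$ is the associative unital $\mathbb C$-algebra generated by invertible $x,y$ and $\mathbb E_{a,b;q,p}$ (with $a,b$ commuting) subject to $x^{-1}x=xx^{-1}=1$, $y^{-1}y=yy^{-1}=1$, $yx=w_{a,b;q,p}(1,1)xy$, $xf(a,b)=f(aq,bq^2)x$, $yf(a,b)=f(aq^2,bq)y$ for all $f\in\mathbb E_{a,b;q,p}$; $\mathbb C_{a,b;q,p}[[x,y,y^{-1}]]$ and $\mathbb C_{a,b;q,p}[[x,x^{-1},y]]$ are the formal power series extensions (no negative powers of $x$, resp. of $y$), with $(x+y)^n$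 for $n<0$ expanded as $((1+xy^{-1})y)^n$, resp. $(x(1+x^{-1}y))^n$. Here $w_{a,b;q,p}(s,t)=\frac{\theta(aq^{s+2t},bq^{2s+t-2},aq^{t-s-1}/b;p)}{\theta(aq^{s+2t-2},bq^{2s+t},aq^{t-s+1}/b;p)}q$, $W_{a,b;q,p}(s,t)=\prod_{j=1}^tw_{a,b;q,p}(s,j)$ with product convention $\prod_{j=l}^mA_j=A_l\cdots A_m$ ($m>l-1$), $1$ ($m=l-1$), $A_{l-1}^{-1}\cdots A_{m+1}^{-1}$ ($m<l-1$). The elliptic binomial coefficients $\binom nk_{a,b;q,p}$ are the unique family with $\binom n0=\binom nn=1$ and $\binom{n+1}k=\binom nk+\binom n{k-1}W_{a,b;q,p}(k,n+1-k)$ for $(n+1,k)\ne(0,0)$ (closed form $\frac{(q^{1+k},aq^{1+k},bq^{1+k},aq^{1-k}/b;q,p)_{n-k}}{(q,aq,bq^{1+2k},aq/b;q,p)_{n-k}}$, $(x;q,p)_r=\prod_{i=0}^{r-1}\theta(xq^i;p)$). Coefficient extraction: $[x^ky^{n-k}](x+y)^n$ is the coefficient of $x^ky^{n-k}$ (coefficient written on the left) in the first expansion if $k\ge0$ and in the second expansion if $k<0$. *)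

theory Defs
  imports "HOL-Analysis.Analysis"
begin

definition theta :: "complex \<Rightarrow> complex \<Rightarrow> complex" where
  "theta x p = (\<Prod>j. (1 - p ^ j * x) * (1 - p ^ Suc j / x))"

text \<open>Product with the convention prod_{j=l}^m A_j = A_l...A_m (m > l-1), 1 (m = l-1),
  A_(l-1)^-1 ... A_(m+1)^-1 (m < l-1).  (Complex numbers commute, so order is irrelevant.)\<close>
definition gprod :: "(int \<Rightarrow> complex) \<Rightarrow> int \<Rightarrow> int \<Rightarrow> complex" where
  "gprod A l m = (if l - 1 \<le> m then (\<Prod>j\<in>{l..m}. A j) else (\<Prod>j\<in>{m+1..l-1}. inverse (A j)))"

definition ew :: "complex \<Rightarrow> complex \<Rightarrow> complex \<Rightarrow> complex \<Rightarrow> int \<Rightarrow> int \<Rightarrow> complex" where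
  "ew a b q p s t =
     (theta (a * q powi (s + 2 * t)) p * theta (b * q powi (2 * s + t - 2)) p * theta (a * q powi (t - s - 1) / b) p)
   / (theta (a * q powi (s + 2 * t - 2)) p * theta (b * q powi (2 * s + t)) p * theta (a * q powi (t - s + 1) / b) p)
   * q"

definition eW :: "complex \<Rightarrow> complex \<Rightarrow> complex \<Rightarrow> complex \<Rightarrow> int \<Rightarrow> int \<Rightarrow> complex" where
  "eW a b q p s t = gprod (\<lambda>j. ew a b q p s j) 1 t"

definition is_ebinom :: "complex \<Rightarrow> complex \<Rightarrow> complex \<Rightarrow> complex \<Rightarrow> (int \<Rightarrow> int \<Rightarrow> complex) \<Rightarrow> bool" where
  "is_ebinom a b q p C \<longleftrightarrow>
     (\<forall>n. C n 0 = 1 \<and> C n n = 1) \<and>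
     (\<forall>n k. (n + 1, k) \<noteq> (0, 0) \<longrightarrow> C (n + 1) k = C n k + C n (k - 1) * eW a b q p k (n + 1 - k))"

definition ebinom :: "complex \<Rightarrow> complex \<Rightarrow> complex \<Rightarrow> complex \<Rightarrow> int \<Rightarrow> int \<Rightarrow> complex" where
  "ebinom a b q p = (THE C. is_ebinom a b q p C)"

text \<open>A series is a family of coefficients: s k l is the coefficient (a function of (a,b),
  written on the left) of x^k y^l.\<close>
type_synonym eser = "int \<Rightarrow> int \<Rightarrow> (complex \<Rightarrow> complex \<Rightarrow> complex)"

text \<open>Commutation factor: y^l x^m = Phi(l,m) x^m y^l, Phi(l,m) = prod_{j=1}^m W(j,l).\<close>
definition ePhi :: "complex \<Rightarrow> complex \<Rightarrow> int \<Rightarrow> int \<Rightarrow> complex \<Rightarrow> complex \<Rightarrow> complex" where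
  "ePhi q p l m a b = gprod (\<lambda>j. eW a b q p j l) 1 m"

definition szero :: eser where "szero = (\<lambda>k l a b. 0)"

definition sone :: eser where "sone = (\<lambda>k l a b. if (k, l) = (0, 0) then 1 else 0)"

definition smono :: "int \<Rightarrow> int \<Rightarrow> eser" where
  "smono i j = (\<lambda>k l a b. if (k, l) = (i, j) then 1 else 0)"

definition sadd :: "eser \<Rightarrow> eser \<Rightarrow> eser" where
  "sadd c d = (\<lambda>k l a b. c k l a b + d k l a b)"

definition sneg :: "eser \<Rightarrow> eser" where
  "sneg c = (\<lambda>k l a b. - c k l a b)"

text \<open>Product, using x f(a,b) = f(aq,bq^2) x, y f(a,b) = f(aq^2,bq) y and y^l x^m = Phi(l,m) x^m y^l:
  (f x^k1 y^l1)(g x^k2 y^l2) = f(a,b) g(aq^(k1+2l1), bq^(2k1+l1)) Phi(l1,k2)(aq^k1,bq^(2k1)) x^(k1+k2) y^(l1+l2).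
  The sum ranges over the (finite, in both completed algebras) set of contributing index pairs.\<close>
definition smul :: "complex \<Rightarrow> complex \<Rightarrow> eser \<Rightarrow> eser \<Rightarrow> eser" where
  "smul q p c d = (\<lambda>k l a b.
     \<Sum>(k1, l1) \<in> {(k1, l1). c k1 l1 \<noteq> (\<lambda>a b. 0) \<and> d (k - k1) (l - l1) \<noteq> (\<lambda>a b. 0)}.
        c k1 l1 a b * d (k - k1) (l - l1) (a * q powi (k1 + 2 * l1)) (b * q powi (2 * k1 + l1))
        * ePhi q p l1 (k - k1) (a * q powi k1) (b * q powi (2 * k1)))"

fun spow :: "complex \<Rightarrow> complex \<Rightarrow> eser \<Rightarrow> nat \<Rightarrow> eser" where
  "spow q p s 0 = sone"
| "spow q p s (Suc n) = smul q p (spow q p s n) s"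

definition ssum :: "(nat \<Rightarrow> eser) \<Rightarrow> eser" where
  "ssum F = (\<lambda>k l a b. \<Sum>j \<in> {j. F j k l \<noteq> (\<lambda>a b. 0)}. F j k l a b)"

text \<open>(1+u)^(-1) = sum_{j>=0} (-u)^j\<close>
definition sgeo :: "complex \<Rightarrow> complex \<Rightarrow> eser \<Rightarrow> eser" where
  "sgeo q p u = ssum (\<lambda>j. spow q p (sneg u) j)"

text \<open>(x+y)^(-1) in C[[x,y,y^-1]]: ((1+xy^-1)y)^(-1) = y^-1 (1+xy^-1)^(-1).\<close>
definition sinv1 :: "complex \<Rightarrow> complex \<Rightarrow> eser" where
  "sinv1 q p = smul q p (smono 0 (-1)) (sgeo q p (smul q p (smono 1 0) (smono 0 (-1))))"

text \<open>(x+y)^(-1) in C[[x,x^-1,y]]: (x(1+x^-1y))^(-1) = (1+x^-1y)^(-1) x^-1.\<close>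
definition sinv2 :: "complex \<Rightarrow> complex \<Rightarrow> eser" where
  "sinv2 q p = smul q p (sgeo q p (smul q p (smono (-1) 0) (smono 0 1))) (smono (-1) 0)"

text \<open>(x+y)^n in C[[x,y,y^-1]] resp. C[[x,x^-1,y]].\<close>
definition xy_pow1 :: "complex \<Rightarrow> complex \<Rightarrow> int \<Rightarrow> eser" where
  "xy_pow1 q p n = (if 0 \<le> n then spow q p (sadd (smono 1 0) (smono 0 1)) (nat n)
                    else spow q p (sinv1 q p) (nat (- n)))"

definition xy_pow2 :: "complex \<Rightarrow> complex \<Rightarrow> int \<Rightarrow> eser" where
  "xy_pow2 q p n = (if 0 \<le> n then spow q p (sadd (smono 1 0) (smono 0 1)) (nat n)
                    else spow q p (sinv2 q p) (nat (- n)))"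

definition xy_coeff :: "complex \<Rightarrow> complex \<Rightarrow> int \<Rightarrow> int \<Rightarrow> (complex \<Rightarrow> complex \<Rightarrow> complex)" where
  "xy_coeff q p n k = (if 0 \<le> k then xy_pow1 q p n k (n - k) else xy_pow2 q p n k (n - k))"

definition generic_pt :: "complex \<Rightarrow> complex \<Rightarrow> complex \<Rightarrow> complex \<Rightarrow> bool" where
  "generic_pt q p a b \<longleftrightarrow> a \<noteq> 0 \<and> b \<noteq> 0 \<and>
     (\<forall>i::int. theta (a * q powi i) p \<noteq> 0 \<and> theta (b * q powi i) p \<noteq> 0 \<and> theta (a * q powi i / b) p \<noteq> 0)"

end

theory Submission
  imports Defs
begin

definition fin2 :: "eser \<Rightarrow> eser \<Rightarrow> bool" where
  "fin2 c d \<longleftrightarrow> (\<forall>k l. finite {(k1, l1). c k1 l1 \<noteq> (\<lambda>a b. 0) \<and> d (k - k1) (l - l1) \<noteq> (\<lambda>a b. 0)})"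

definition cone1 :: "int \<Rightarrow> eser \<Rightarrow> bool" where
  "cone1 N c \<longleftrightarrow> (\<forall>k l. c k l \<noteq> (\<lambda>a b. 0) \<longrightarrow> 0 \<le> k \<and> k + l = N)"

definition cone2 :: "int \<Rightarrow> eser \<Rightarrow> bool" where
  "cone2 N c \<longleftrightarrow> (\<forall>k l. c k l \<noteq> (\<lambda>a b. 0) \<longrightarrow> 0 \<le> l \<and> k + l = N)"

definition sX :: eser where "sX = sadd (smono 1 0) (smono 0 1)"

lemma smul_sub:
  assumes "finite T" "{(k1, l1). c k1 l1 \<noteq> (\<lambda>a b. 0) \<and> d (k - k1) (l - l1) \<noteq> (\<lambda>a b. 0)} \<subseteq> T"
  shows "smul q p c d k l a b = (\<Sum>(k1, l1)\<in>T. c k1 l1 a b * d (k - k1) (l - l1) (a * q powi (k1 + 2 * l1)) (b * q powi (2 * k1 + l1))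
        * ePhi q p l1 (k - k1) (a * q powi k1) (b * q powi (2 * k1)))"
  unfolding smul_def
  by (rule sum.mono_neutral_left[OF assms(1) assms(2)]) auto

lemma smul_left_fin:
  assumes "finite C" "\<And>k l. c k l \<noteq> (\<lambda>a b. 0) \<Longrightarrow> (k, l) \<in> C"
  shows "smul q p c d k l a b = (\<Sum>(k1, l1)\<in>C. c k1 l1 a b * d (k - k1) (l - l1) (a * q powi (k1 + 2 * l1)) (b * q powi (2 * k1 + l1))
        * ePhi q p l1 (k - k1) (a * q powi k1) (b * q powi (2 * k1)))"
  by (rule smul_sub) (use assms in auto)

lemma smul_right_fin:
  assumes "finite D" "\<And>k l. d k l \<noteq> (\<lambda>a b. 0) \<Longrightarrow> (k, l) \<in> D"
  shows "smul q p c d k l a b = (\<Sum>(k2, l2)\<in>D. c (k - k2) (l - l2) a b * d k2 l2 (a * q powi ((k - k2) + 2 * (l - l2))) (b * q powi (2 * (k - k2) + (l - l2)))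
        * ePhi q p (l - l2) k2 (a * q powi (k - k2)) (b * q powi (2 * (k - k2))))"
proof -
  let ?f = "\<lambda>(k2, l2). (k - k2, l - l2)"
  have inj: "inj_on ?f D" by (auto simp: inj_on_def)
  have "smul q p c d k l a b = (\<Sum>(k1, l1)\<in>?f ` D. c k1 l1 a b * d (k - k1) (l - l1) (a * q powi (k1 + 2 * l1)) (b * q powi (2 * k1 + l1))
        * ePhi q p l1 (k - k1) (a * q powi k1) (b * q powi (2 * k1)))"
  proof (rule smul_sub)
    show "finite (?f ` D)" using assms(1) by simp
    show "{(k1, l1). c k1 l1 \<noteq> (\<lambda>a b. 0) \<and> d (k - k1) (l - l1) \<noteq> (\<lambda>a b. 0)} \<subseteq> ?f ` D"
    proof safe
      fix k1 l1 assume "d (k - k1) (l - l1) \<noteq> (\<lambda>a b. 0)"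
      then have "(k - k1, l - l1) \<in> D" by (rule assms(2))
      then show "(k1, l1) \<in> ?f ` D" by (auto intro!: image_eqI[where x = "(k - k1, l - l1)"])
    qed
  qed
  also have "\<dots> = (\<Sum>(k2, l2)\<in>D. c (k - k2) (l - l2) a b * d k2 l2 (a * q powi ((k - k2) + 2 * (l - l2))) (b * q powi (2 * (k - k2) + (l - l2)))
        * ePhi q p (l - l2) k2 (a * q powi (k - k2)) (b * q powi (2 * (k - k2))))"
    by (subst sum.reindex[OF inj]) (simp add: case_prod_beta)
  finally show ?thesis .
qed

lemma smul_supp:
  assumes "smul q p c d k l \<noteq> (\<lambda>a b. 0)"
  shows "\<exists>k1 l1. c k1 l1 \<noteq> (\<lambda>a b. 0) \<and> d (k - k1) (l - l1) \<noteq> (\<lambda>a b. 0)"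
proof (rule ccontr)
  assume "\<not> ?thesis"
  then have "{(k1, l1). c k1 l1 \<noteq> (\<lambda>a b. 0) \<and> d (k - k1) (l - l1) \<noteq> (\<lambda>a b. 0)} = {}" by auto
  then have "smul q p c d k l = (\<lambda>a b. 0)" unfolding smul_def by (simp only:) simp
  with assms show False by simp
qed

lemma cone1_smul: assumes "cone1 N1 c" "cone1 N2 d" shows "cone1 (N1 + N2) (smul q p c d)"
  unfolding cone1_def
proof (intro allI impI)
  fix k l assume "smul q p c d k l \<noteq> (\<lambda>a b. 0)"
  then obtain k1 l1 where "c k1 l1 \<noteq> (\<lambda>a b. 0)" "d (k - k1) (l - l1) \<noteq> (\<lambda>a b. 0)"
    using smul_supp by blast
  then have "0 \<le> k1 \<and> k1 + l1 = N1" "0 \<le> k - k1 \<and> (k - k1) + (l - l1) = N2"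
    using assms unfolding cone1_def by blast+
  then show "0 \<le> k \<and> k + l = N1 + N2" by linarith
qed

lemma cone2_smul: assumes "cone2 N1 c" "cone2 N2 d" shows "cone2 (N1 + N2) (smul q p c d)"
  unfolding cone2_def
proof (intro allI impI)
  fix k l assume "smul q p c d k l \<noteq> (\<lambda>a b. 0)"
  then obtain k1 l1 where "c k1 l1 \<noteq> (\<lambda>a b. 0)" "d (k - k1) (l - l1) \<noteq> (\<lambda>a b. 0)"
    using smul_supp by blast
  then have "0 \<le> l1 \<and> k1 + l1 = N1" "0 \<le> l - l1 \<and> (k - k1) + (l - l1) = N2"
    using assms unfolding cone2_def by blast+
  then show "0 \<le> l \<and> k + l = N1 + N2" by linarith
qed

lemma fin2_cone1: assumes "cone1 N1 c" "cone1 N2 d" shows "fin2 c d"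
  unfolding fin2_def
proof (intro allI)
  fix k l
  show "finite {(k1, l1). c k1 l1 \<noteq> (\<lambda>a b. 0) \<and> d (k - k1) (l - l1) \<noteq> (\<lambda>a b. 0)}"
  proof (rule finite_subset)
    show "{(k1, l1). c k1 l1 \<noteq> (\<lambda>a b. 0) \<and> d (k - k1) (l - l1) \<noteq> (\<lambda>a b. 0)} \<subseteq> (\<lambda>k1. (k1, N1 - k1)) ` {0..k}"
      using assms unfolding cone1_def by (force intro: image_eqI)
  qed simp
qed

lemma fin2_cone2: assumes "cone2 N1 c" "cone2 N2 d" shows "fin2 c d"
  unfolding fin2_def
proof (intro allI)
  fix k l
  show "finite {(k1, l1). c k1 l1 \<noteq> (\<lambda>a b. 0) \<and> d (k - k1) (l - l1) \<noteq> (\<lambda>a b. 0)}"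
  proof (rule finite_subset)
    show "{(k1, l1). c k1 l1 \<noteq> (\<lambda>a b. 0) \<and> d (k - k1) (l - l1) \<noteq> (\<lambda>a b. 0)} \<subseteq> (\<lambda>l1. (N1 - l1, l1)) ` {0..l}"
      using assms unfolding cone2_def by (force intro: image_eqI)
  qed simp
qed

lemma cone1_spow: "cone1 N s \<Longrightarrow> cone1 (int m * N) (spow q p s m)"
proof (induction m)
  case 0
  then show ?case by (simp add: cone1_def sone_def fun_eq_iff)
next
  case (Suc m)
  then show ?case using cone1_smul[of "int m * N" "spow q p s m" N s] by (simp add: algebra_simps)
qed

lemma cone2_spow: "cone2 N s \<Longrightarrow> cone2 (int m * N) (spow q p s m)"
proof (induction m)
  case 0
  then show ?case by (simp add: cone2_def sone_def fun_eq_iff)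
next
  case (Suc m)
  then show ?case using cone2_smul[of "int m * N" "spow q p s m" N s] by (simp add: algebra_simps)
qed


context fixes q p :: complex assumes qnz: "q \<noteq> 0"
begin

lemma hq: "q powi x * q powi y = q powi (x + y)"
  by (simp add: power_int_add qnz)

lemma ew_shift:
  assumes "u + s + 2*t = s2 + 2*t2" "v + 2* s + t = 2* s2 + t2"
  shows "ew (a * q powi u) (b * q powi v) q p s t = ew a b q p s2 t2"
proof -
  have A: "x * q powi w * q powi X = x * q powi Y" if "w + X = Y" for x w X Y
    using that by (simp add: mult.assoc hq)
  have e1: "a * q powi u * q powi (s + 2*t) = a * q powi (s2 + 2*t2)"
    by (rule A) (use assms in linarith)
  have e2: "a * q powi u * q powi (s + 2*t - 2) = a * q powi (s2 + 2*t2 - 2)"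
    by (rule A) (use assms in linarith)
  have e3: "b * q powi v * q powi (2* s + t - 2) = b * q powi (2* s2 + t2 - 2)"
    by (rule A) (use assms in linarith)
  have e4: "b * q powi v * q powi (2* s + t) = b * q powi (2* s2 + t2)"
    by (rule A) (use assms in linarith)
  have B: "a * q powi u * q powi X / (b * q powi v) = a * q powi Y / b" if "u + X = Y + v" for X Y
  proof -
    have eq: "a * q powi u * q powi X = (a * q powi Y) * q powi v"
      using A[of u X "Y + v" a] that by (simp add: mult.assoc hq)
    have "a * q powi u * q powi X / (b * q powi v) = (a * q powi Y) * q powi v / (b * q powi v)"
      by (simp only: eq)
    also have "\<dots> = a * q powi Y / b"
      by (rule nonzero_mult_divide_mult_cancel_right) (simp add: qnz)
    finally show ?thesis .
  qed
  have e5: "a * q powi u * q powi (t - s - 1) / (b * q powi v) = a * q powi (t2 - s2 - 1) / b"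
    by (rule B) (use assms in linarith)
  have e6: "a * q powi u * q powi (t - s + 1) / (b * q powi v) = a * q powi (t2 - s2 + 1) / b"
    by (rule B) (use assms in linarith)
  show ?thesis by (simp only: ew_def e1 e2 e3 e4 e5 e6)
qed

lemma generic_shift:
  assumes "generic_pt q p a b"
  shows "generic_pt q p (a * q powi u) (b * q powi v)"
proof -
  have A: "x * q powi u * q powi i = x * q powi (u + i)" for x i u
    by (simp add: mult.assoc hq)
  have B: "a * q powi u * q powi i / (b * q powi v) = a * q powi (u + i - v) / b" for i
  proof -
    have "q powi u * q powi i = q powi (u + i - v) * q powi v"
      by (simp add: hq)
    then have eq: "a * q powi u * q powi i = (a * q powi (u + i - v)) * q powi v"
      by (simp add: mult.assoc)
    have "a * q powi u * q powi i / (b * q powi v) = (a * q powi (u + i - v)) * q powi v / (b * q powi v)"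
      by (simp only: eq)
    also have "\<dots> = a * q powi (u + i - v) / b"
      by (rule nonzero_mult_divide_mult_cancel_right) (simp add: qnz)
    finally show ?thesis .
  qed
  show ?thesis
    unfolding generic_pt_def
  proof (intro conjI allI)
    fix i
    show "theta (a * q powi u * q powi i) p \<noteq> 0" unfolding A
      using assms unfolding generic_pt_def by blast
    show "theta (b * q powi v * q powi i) p \<noteq> 0" unfolding A
      using assms unfolding generic_pt_def by blast
    show "theta (a * q powi u * q powi i / (b * q powi v)) p \<noteq> 0" unfolding B
      using assms unfolding generic_pt_def by blast
  qed (use assms qnz in \<open>auto simp: generic_pt_def\<close>)
qed

lemma ew_nz:
  assumes "generic_pt q p a b"
  shows "ew a b q p s t \<noteq> 0"
  using assms unfolding generic_pt_def ew_def by (simp add: qnz)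

lemma gprod_1_0[simp]: "gprod A 1 0 = 1"
  by (simp add: gprod_def)

lemma gprod_one[simp]: "gprod (\<lambda>j. 1) l m = 1"
  by (simp add: gprod_def)

lemma gprod_1_1[simp]: "gprod A 1 1 = A 1"
  by (simp add: gprod_def)

lemma gprod_nz: "(\<And>j. A j \<noteq> 0) \<Longrightarrow> gprod A l m \<noteq> 0"
  by (simp add: gprod_def)

lemma gprod_succ:
  assumes nz: "\<And>j. A j \<noteq> 0"
  shows "gprod A 1 (t + 1) = gprod A 1 t * A (t + 1)"
proof -
  consider "t \<ge> 0" | "t = -1" | "t \<le> -2" by linarith
  then show ?thesis
  proof cases
    case 1
    have "{1..t+1} = insert (t+1) {1..t}" using 1 by auto
    then show ?thesis using 1 by (simp add: gprod_def mult.commute)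
  next
    case 2
    then show ?thesis using nz[of 0] by (simp add: gprod_def)
  next
    case 3
    have "{t+1..0} = insert (t+1) {t+2..0}" using 3 by auto
    moreover have "{t+1+1..0} = {t+2..0}" by auto
    ultimately show ?thesis using 3 nz[of "t+1"] by (simp add: gprod_def field_simps)
  qed
qed

lemma gprod_add:
  assumes nz: "\<And>j. A j \<noteq> 0"
  shows "gprod A 1 (s + t) = gprod A 1 s * gprod (\<lambda>i. A (i + s)) 1 t"
proof (induction t rule: int_induct[where k = 0])
  case base
  then show ?case by simp
next
  case (step1 i)
  have "gprod A 1 (s + (i + 1)) = gprod A 1 (s + i) * A (s + i + 1)"
    using gprod_succ[of A "s + i"] nz by (simp add: add.assoc)
  also have "\<dots> = gprod A 1 s * (gprod (\<lambda>i. A (i + s)) 1 i * A (i + 1 + s))"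
    using step1 by (simp add: algebra_simps)
  also have "gprod (\<lambda>i. A (i + s)) 1 i * A (i + 1 + s) = gprod (\<lambda>i. A (i + s)) 1 (i + 1)"
    using gprod_succ[of "\<lambda>i. A (i + s)" i] nz by simp
  finally show ?case .
next
  case (step2 i)
  have e1: "gprod A 1 (s + i) = gprod A 1 (s + (i - 1)) * A (s + i)"
    using gprod_succ[of A "s + (i - 1)"] nz by (simp add: algebra_simps)
  have e2: "gprod (\<lambda>i. A (i + s)) 1 i = gprod (\<lambda>i. A (i + s)) 1 (i - 1) * A (i + s)"
    using gprod_succ[of "\<lambda>i. A (i + s)" "i - 1"] nz by simp
  have "gprod A 1 (s + (i - 1)) * A (s + i) = gprod A 1 (s + i)" using e1 by simp
  also have "\<dots> = gprod A 1 s * gprod (\<lambda>i. A (i + s)) 1 i" using step2(2) .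
  also have "\<dots> = (gprod A 1 s * gprod (\<lambda>i. A (i + s)) 1 (i - 1)) * A (s + i)"
    using e2 by (simp add: add.commute mult.assoc)
  finally have "gprod A 1 (s + (i - 1)) * A (s + i) = (gprod A 1 s * gprod (\<lambda>i. A (i + s)) 1 (i - 1)) * A (s + i)" .
  then show ?case using nz[of "s + i"] by (simp only: mult_cancel_right) simp
qed

lemma gprod_mult: "gprod (\<lambda>j. A j * B j) l m = gprod A l m * gprod B l m"
  by (simp add: gprod_def prod.distrib)

lemma eW_0[simp]: "eW a b q p s 0 = 1"
  by (simp add: eW_def)

lemma ePhi_0[simp]: "ePhi q p l 0 a b = 1"
  by (simp add: ePhi_def)

lemma ePhi_l0[simp]: "ePhi q p 0 m a b = 1"
  by (simp add: ePhi_def)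

lemma ePhi_1: "ePhi q p l 1 a b = eW a b q p 1 l"
  by (simp add: ePhi_def)

lemma eW_nz: "generic_pt q p a b \<Longrightarrow> eW a b q p s t \<noteq> 0"
  unfolding eW_def by (rule gprod_nz) (rule ew_nz)

lemma eW_xshift: "eW (a * q powi k1) (b * q powi (2 * k1)) q p j l = eW a b q p (j + k1) l"
  unfolding eW_def by (rule arg_cong[where f = "\<lambda>A. gprod A 1 l"], rule ext, rule ew_shift) auto

lemma eW_xyshift: "eW (a * q powi (k1 + 2 * l1)) (b * q powi (2 * k1 + l1)) q p s t
   = gprod (\<lambda>i. ew a b q p (s + k1) (i + l1)) 1 t"
  unfolding eW_def by (rule arg_cong[where f = "\<lambda>A. gprod A 1 t"], rule ext, rule ew_shift) auto

lemma ePhi_xshift: "ePhi q p l m (a * q powi k1) (b * q powi (2 * k1)) = gprod (\<lambda>j. eW a b q p (j + k1) l) 1 m"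
  unfolding ePhi_def eW_xshift ..

lemma ePhi_1_shift: "ePhi q p l 1 (a * q powi (k - 1)) (b * q powi (2 * (k - 1))) = eW a b q p k l"
  unfolding ePhi_1 eW_xshift by simp


lemma sX_supp: "sX k l \<noteq> (\<lambda>a b. 0) \<Longrightarrow> (k, l) \<in> {(1, 0), (0, 1)}"
  by (auto simp: sX_def sadd_def smono_def)

lemma smul_X: "smul q p c sX k l a b = c k (l - 1) a b + c (k - 1) l a b * eW a b q p k l"
proof -
  have "smul q p c sX k l a b = c (k - 1) l a b * ePhi q p l 1 (a * q powi (k - 1)) (b * q powi (2 * (k - 1)))
     + c k (l - 1) a b"
    by (subst smul_right_fin[where D = "{(1, 0), (0, 1)}"]) (auto simp: sX_supp sX_def sadd_def smono_def)
  then show ?thesis using ePhi_1_shift[where l=l and k=k and a=a and b=b] by (simp add: algebra_simps)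
qed

lemma smul_sone: "smul q p c sone = c"
proof (intro ext)
  fix k l a b
  show "smul q p c sone k l a b = c k l a b"
    by (subst smul_right_fin[where D = "{(0, 0)}"]) (auto simp: sone_def split: if_splits)
qed

lemma assoc_X:
  assumes gen: "generic_pt q p a b" and fin: "fin2 A B"
  shows "smul q p (smul q p A B) sX k l a b = smul q p A (smul q p B sX) k l a b"
proof -
  define S1 where "S1 = {(k1, l1). A k1 l1 \<noteq> (\<lambda>a b. 0) \<and> B (k - k1) (l - 1 - l1) \<noteq> (\<lambda>a b. 0)}"
  define S2 where "S2 = {(k1, l1). A k1 l1 \<noteq> (\<lambda>a b. 0) \<and> B (k - 1 - k1) (l - l1) \<noteq> (\<lambda>a b. 0)}"
  define S where "S = S1 \<union> S2"
  have finS: "finite S" unfolding S_def S1_def S2_def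
    using fin unfolding fin2_def by blast
  define sa where "sa = (\<lambda>k1 l1. a * q powi (k1 + 2 * l1))"
  define sb where "sb = (\<lambda>k1 l1. b * q powi (2 * k1 + l1))"
  define Ph where "Ph = (\<lambda>k1 l1 m. ePhi q p l1 m (a * q powi k1) (b * q powi (2 * k1)))"
  have L1: "smul q p A B k (l - 1) a b = (\<Sum>(k1, l1)\<in>S. A k1 l1 a b * B (k - k1) (l - 1 - l1) (sa k1 l1) (sb k1 l1) * Ph k1 l1 (k - k1))"
    unfolding sa_def sb_def Ph_def by (rule smul_sub[OF finS]) (auto simp: S_def S1_def)
  have L2: "smul q p A B (k - 1) l a b = (\<Sum>(k1, l1)\<in>S. A k1 l1 a b * B (k - 1 - k1) (l - l1) (sa k1 l1) (sb k1 l1) * Ph k1 l1 (k - 1 - k1))"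
    unfolding sa_def sb_def Ph_def by (rule smul_sub[OF finS]) (auto simp: S_def S2_def)
  have R: "smul q p A (smul q p B sX) k l a b = (\<Sum>(k1, l1)\<in>S. A k1 l1 a b * smul q p B sX (k - k1) (l - l1) (sa k1 l1) (sb k1 l1) * Ph k1 l1 (k - k1))"
    unfolding sa_def sb_def Ph_def
  proof (rule smul_sub[OF finS], safe)
    fix k1 l1
    assume A: "A k1 l1 \<noteq> (\<lambda>a b. 0)" and BX: "smul q p B sX (k - k1) (l - l1) \<noteq> (\<lambda>a b. 0)"
    from BX obtain a' b' where "smul q p B sX (k - k1) (l - l1) a' b' \<noteq> 0" by (auto simp: fun_eq_iff)
    then have "B (k - k1) (l - l1 - 1) a' b' \<noteq> 0 \<or> B (k - k1 - 1) (l - l1) a' b' \<noteq> 0"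
      by (auto simp: smul_X)
    then have "B (k - k1) (l - l1 - 1) \<noteq> (\<lambda>a b. 0) \<or> B (k - k1 - 1) (l - l1) \<noteq> (\<lambda>a b. 0)"
      by metis
    then show "(k1, l1) \<in> S" using A unfolding S_def S1_def S2_def by (auto simp: algebra_simps)
  qed
  have key: "Ph k1 l1 (k - 1 - k1) * eW a b q p k l = eW (sa k1 l1) (sb k1 l1) q p (k - k1) (l - l1) * Ph k1 l1 (k - k1)" for k1 l1
  proof -
    have nz1: "\<And>j. eW a b q p (j + k1) l1 \<noteq> 0" using eW_nz[OF gen] by blast
    have nz2: "\<And>j. ew a b q p k j \<noteq> 0" using ew_nz[OF gen] by blast
    have "Ph k1 l1 (k - k1) = gprod (\<lambda>j. eW a b q p (j + k1) l1) 1 (k - 1 - k1 + 1)"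
      unfolding Ph_def ePhi_xshift by simp
    also have "\<dots> = Ph k1 l1 (k - 1 - k1) * eW a b q p k l1"
      unfolding gprod_succ[of "\<lambda>j. eW a b q p (j + k1) l1", OF nz1] Ph_def ePhi_xshift by simp
    finally have P: "Ph k1 l1 (k - k1) = Ph k1 l1 (k - 1 - k1) * eW a b q p k l1" .
    have E: "eW (sa k1 l1) (sb k1 l1) q p (k - k1) (l - l1) = gprod (\<lambda>i. ew a b q p k (i + l1)) 1 (l - l1)"
      unfolding sa_def sb_def eW_xyshift by simp
    have "eW a b q p k l = eW a b q p k (l1 + (l - l1))" by simp
    also have "\<dots> = eW a b q p k l1 * gprod (\<lambda>i. ew a b q p k (i + l1)) 1 (l - l1)"
      unfolding eW_def by (rule gprod_add[OF nz2])
    finally show ?thesis using P E by (simp add: algebra_simps)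
  qed
  have "smul q p (smul q p A B) sX k l a b = smul q p A B k (l - 1) a b + smul q p A B (k - 1) l a b * eW a b q p k l"
    by (rule smul_X)
  also have "\<dots> = (\<Sum>(k1, l1)\<in>S. A k1 l1 a b * B (k - k1) (l - 1 - l1) (sa k1 l1) (sb k1 l1) * Ph k1 l1 (k - k1)
      + A k1 l1 a b * B (k - 1 - k1) (l - l1) (sa k1 l1) (sb k1 l1) * (Ph k1 l1 (k - 1 - k1) * eW a b q p k l))"
    unfolding L1 L2 sum_distrib_right sum.distrib[symmetric] by (simp add: case_prod_beta mult.assoc)
  also have "\<dots> = (\<Sum>(k1, l1)\<in>S. A k1 l1 a b * smul q p B sX (k - k1) (l - l1) (sa k1 l1) (sb k1 l1) * Ph k1 l1 (k - k1))"
  proof (rule sum.cong[OF refl], clarify)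
    fix k1 l1
    show "A k1 l1 a b * B (k - k1) (l - 1 - l1) (sa k1 l1) (sb k1 l1) * Ph k1 l1 (k - k1)
      + A k1 l1 a b * B (k - 1 - k1) (l - l1) (sa k1 l1) (sb k1 l1) * (Ph k1 l1 (k - 1 - k1) * eW a b q p k l)
      = A k1 l1 a b * smul q p B sX (k - k1) (l - l1) (sa k1 l1) (sb k1 l1) * Ph k1 l1 (k - k1)"
      unfolding smul_X key by (simp add: algebra_simps)
  qed
  also have "\<dots> = smul q p A (smul q p B sX) k l a b" using R by simp
  finally show ?thesis .
qed

lemma smul_cong_gen:
  assumes gen: "generic_pt q p a b" and f1: "fin2 c d" and f2: "fin2 c d'"
    and eq: "\<And>k l a b. generic_pt q p a b \<Longrightarrow> d k l a b = d' k l a b"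
  shows "smul q p c d k l a b = smul q p c d' k l a b"
proof -
  define S where "S = {(k1, l1). c k1 l1 \<noteq> (\<lambda>a b. 0) \<and> d (k - k1) (l - l1) \<noteq> (\<lambda>a b. 0)}
    \<union> {(k1, l1). c k1 l1 \<noteq> (\<lambda>a b. 0) \<and> d' (k - k1) (l - l1) \<noteq> (\<lambda>a b. 0)}"
  have finS: "finite S" using f1 f2 unfolding S_def fin2_def by blast
  show ?thesis
    apply (subst smul_sub[OF finS], force simp: S_def)
    apply (subst smul_sub[OF finS], force simp: S_def)
    apply (rule sum.cong[OF refl])
    apply (clarsimp simp: eq[OF generic_shift[OF gen]])
    done
qed

lemma spow_neg_supp:
  "spow q p (sneg (smono e1 e2)) j k l \<noteq> (\<lambda>a b. 0) \<Longrightarrow> k = int j * e1 \<and> l = int j * e2"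
proof (induction j arbitrary: k l)
  case 0
  then show ?case by (auto simp: sone_def split: if_splits)
next
  case (Suc j)
  then obtain k1 l1 where "spow q p (sneg (smono e1 e2)) j k1 l1 \<noteq> (\<lambda>a b. 0)"
    "sneg (smono e1 e2) (k - k1) (l - l1) \<noteq> (\<lambda>a b. 0)"
    using smul_supp by (metis spow.simps(2))
  then have "k1 = int j * e1 \<and> l1 = int j * e2" "k - k1 = e1 \<and> l - l1 = e2"
    using Suc.IH by (auto simp: sneg_def smono_def split: if_splits)
  then show ?case by (simp add: algebra_simps)
qed

lemma spow_neg_step:
  "spow q p (sneg (smono e1 e2)) (Suc j) k l a b =
   - spow q p (sneg (smono e1 e2)) j (k - e1) (l - e2) a b * ePhi q p (l - e2) e1 (a * q powi (k - e1)) (b * q powi (2 * (k - e1)))"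
  by (simp only: spow.simps, subst smul_right_fin[where D = "{(e1, e2)}"])
     (auto simp: sneg_def smono_def split: if_splits)

lemma sgeo_on:
  assumes "(e1, e2) \<noteq> (0, 0)"
  shows "sgeo q p (smono e1 e2) (int j * e1) (int j * e2) a b = spow q p (sneg (smono e1 e2)) j (int j * e1) (int j * e2) a b"
proof -
  let ?F = "\<lambda>j. spow q p (sneg (smono e1 e2)) j"
  let ?S = "{j'. ?F j' (int j * e1) (int j * e2) \<noteq> (\<lambda>a b. 0)}"
  have sub: "?S \<subseteq> {j}"
  proof
    fix j' assume "j' \<in> ?S"
    then have "int j * e1 = int j' * e1 \<and> int j * e2 = int j' * e2" using spow_neg_supp by blast
    then have "(int j - int j') * e1 = 0 \<and> (int j - int j') * e2 = 0" by (simp add: algebra_simps)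
    then show "j' \<in> {j}" using assms by auto
  qed
  have "sgeo q p (smono e1 e2) (int j * e1) (int j * e2) a b = (\<Sum>j'\<in>?S. ?F j' (int j * e1) (int j * e2) a b)"
    by (simp add: sgeo_def ssum_def)
  also have "\<dots> = (\<Sum>j'\<in>{j}. ?F j' (int j * e1) (int j * e2) a b)"
    by (rule sum.mono_neutral_left) (use sub in auto)
  finally show ?thesis by simp
qed

lemma sgeo_off:
  assumes "\<And>j. \<not> (k = int j * e1 \<and> l = int j * e2)"
  shows "sgeo q p (smono e1 e2) k l a b = 0"
proof -
  have "{j'. spow q p (sneg (smono e1 e2)) j' k l \<noteq> (\<lambda>a b. 0)} = {}"
    using spow_neg_supp assms by blast
  then show ?thesis by (simp add: sgeo_def ssum_def)
qed

lemma sgeo_supp: "sgeo q p (smono e1 e2) k l \<noteq> (\<lambda>a b. 0) \<Longrightarrow> \<exists>j. k = int j * e1 \<and> l = int j * e2"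
  using sgeo_off by (metis ext)

lemma geo_mul:
  assumes e: "(e1, e2) \<noteq> (0, 0)"
  shows "smul q p (sgeo q p (smono e1 e2)) (sadd (smono e1 (f2 + e2)) (smono 0 f2)) k l a b = smono 0 f2 k l a b"
proof -
  let ?G = "sgeo q p (smono e1 e2)"
  let ?T = "\<lambda>j. spow q p (sneg (smono e1 e2)) j"
  have dist: "(e1, f2 + e2) \<noteq> (0, f2)" using e by auto
  have v1: "sadd (smono e1 (f2 + e2)) (smono 0 f2) e1 (f2 + e2) = (\<lambda>a b. 1)"
    using dist by (auto simp: sadd_def smono_def fun_eq_iff)
  have v2: "sadd (smono e1 (f2 + e2)) (smono 0 f2) 0 f2 = (\<lambda>a b. 1)"
    using dist by (auto simp: sadd_def smono_def fun_eq_iff)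
  have "smul q p ?G (sadd (smono e1 (f2 + e2)) (smono 0 f2)) k l a b =
     ?G (k - e1) (l - (f2 + e2)) a b * ePhi q p (l - (f2 + e2)) e1 (a * q powi (k - e1)) (b * q powi (2 * (k - e1)))
     + ?G k (l - f2) a b"
    apply (subst smul_right_fin[where D = "{(e1, f2 + e2), (0, f2)}"])
      apply simp
     apply (auto simp: sadd_def smono_def split: if_splits)[1]
    using dist apply (simp add: v1 v2)
    done
  also have "\<dots> = smono 0 f2 k l a b"
  proof (cases "\<exists>j. k = int j * e1 \<and> l - f2 = int j * e2")
    case True
    then obtain j where j: "k = int j * e1" "l - f2 = int j * e2" by blast
    show ?thesis
    proof (cases j)
      case 0
      have off: "?G (k - e1) (l - (f2 + e2)) a b = 0"
      proof (rule sgeo_off)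
        fix i
        show "\<not> (k - e1 = int i * e1 \<and> l - (f2 + e2) = int i * e2)"
        proof
          assume "k - e1 = int i * e1 \<and> l - (f2 + e2) = int i * e2"
          then have "(int i + 1) * e1 = 0 \<and> (int i + 1) * e2 = 0" using j 0 by (simp add: algebra_simps)
          then show False using e by simp
        qed
      qed
      have "?G k (l - f2) a b = 1"
        using sgeo_on[OF e, of 0 a b] j 0 by (simp add: sone_def)
      then show ?thesis using off j 0 by (simp add: smono_def)
    next
      case (Suc i)
      have on1: "?G k (l - f2) a b = ?T (Suc i) k (l - f2) a b"
        using sgeo_on[OF e, of "Suc i" a b] j Suc by simp
      have kk: "k - e1 = int i * e1" "l - f2 - e2 = int i * e2" using j Suc by (simp_all add: algebra_simps)
      have on2: "?G (k - e1) (l - (f2 + e2)) a b = ?T i (k - e1) (l - f2 - e2) a b"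
        using sgeo_on[OF e, of i a b] kk by (simp add: algebra_simps)
      have sm: "smono 0 f2 k l a b = 0"
      proof -
        have "(k, l) \<noteq> (0, f2)"
        proof
          assume "(k, l) = (0, f2)"
          then have "(int i + 1) * e1 = 0 \<and> (int i + 1) * e2 = 0" using j Suc by (simp add: algebra_simps)
          then show False using e by simp
        qed
        then show ?thesis by (simp add: smono_def)
      qed
      show ?thesis
        unfolding on1 on2 spow_neg_step sm by (simp add: algebra_simps)
    qed
  next
    case False
    have off1: "?G k (l - f2) a b = 0" by (rule sgeo_off) (use False in auto)
    have off2: "?G (k - e1) (l - (f2 + e2)) a b = 0"
    proof (rule sgeo_off)
      fix i
      show "\<not> (k - e1 = int i * e1 \<and> l - (f2 + e2) = int i * e2)"
      proof
        assume "k - e1 = int i * e1 \<and> l - (f2 + e2) = int i * e2"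
        then have "k = int (Suc i) * e1 \<and> l - f2 = int (Suc i) * e2" by (simp add: algebra_simps)
        then show False using False by blast
      qed
    qed
    have "(k, l) \<noteq> (0, f2)" using False by (metis add.right_neutral diff_self mult_zero_left of_nat_0 prod.inject)
    then show ?thesis using off1 off2 by (simp add: smono_def)
  qed
  finally show ?thesis .
qed

lemma fin2_leftfin: "finite C \<Longrightarrow> (\<And>k l. c k l \<noteq> (\<lambda>a b. 0) \<Longrightarrow> (k, l) \<in> C) \<Longrightarrow> fin2 c d"
  unfolding fin2_def by (intro allI, erule finite_subset[rotated]) auto

lemma smono_supp: "smono i j k l \<noteq> (\<lambda>a b. 0) \<Longrightarrow> (k, l) \<in> {(i, j)}"
  by (auto simp: smono_def split: if_splits)

lemma cone1_smono: "0 \<le> i \<Longrightarrow> cone1 (i + j) (smono i j)"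
  by (auto simp: cone1_def smono_def split: if_splits)

lemma cone2_smono: "0 \<le> j \<Longrightarrow> cone2 (i + j) (smono i j)"
  by (auto simp: cone2_def smono_def split: if_splits)

lemma cone1_sone: "cone1 0 sone" by (auto simp: cone1_def sone_def split: if_splits)
lemma cone2_sone: "cone2 0 sone" by (auto simp: cone2_def sone_def split: if_splits)

lemma cone1_sX: "cone1 1 sX" unfolding cone1_def
proof (intro allI impI)
  fix k l assume "sX k l \<noteq> (\<lambda>a b. 0)"
  then have "(k, l) \<in> {(1, 0), (0, 1)}" by (rule sX_supp)
  then show "0 \<le> k \<and> k + l = 1" by auto
qed
lemma cone2_sX: "cone2 1 sX" unfolding cone2_def
proof (intro allI impI)
  fix k l assume "sX k l \<noteq> (\<lambda>a b. 0)"
  then have "(k, l) \<in> {(1, 0), (0, 1)}" by (rule sX_supp)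
  then show "0 \<le> l \<and> k + l = 1" by auto
qed

lemma u1_eq: "smul q p (smono 1 0) (smono 0 (-1)) = smono 1 (-1)"
proof (intro ext)
  fix k l a b
  show "smul q p (smono 1 0) (smono 0 (-1)) k l a b = smono 1 (-1) k l a b"
    by (subst smul_left_fin[where C = "{(1, 0)}"]) (auto simp: smono_def)
qed

lemma v2_eq: "smul q p (smono (-1) 0) (smono 0 1) = smono (-1) 1"
proof (intro ext)
  fix k l a b
  show "smul q p (smono (-1) 0) (smono 0 1) k l a b = smono (-1) 1 k l a b"
    by (subst smul_left_fin[where C = "{(-1, 0)}"]) (auto simp: smono_def)
qed

lemma yinv_y: "smul q p (smono 0 (-1)) (smono 0 1) = sone"
proof (intro ext)
  fix k l a b
  show "smul q p (smono 0 (-1)) (smono 0 1) k l a b = sone k l a b"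
    by (subst smul_left_fin[where C = "{(0, -1)}"]) (auto simp: smono_def sone_def)
qed

lemma xinv_X: "smul q p (smono (-1) 0) sX = sadd (smono (-1) (0 + 1)) (smono 0 0)"
proof (intro ext)
  fix k l a b
  show "smul q p (smono (-1) 0) sX k l a b = sadd (smono (-1) (0 + 1)) (smono 0 0) k l a b"
    by (subst smul_left_fin[where C = "{(-1, 0)}"]) (auto simp: smono_def sX_def sadd_def)
qed

lemma sinv1_eq: "sinv1 q p = smul q p (smono 0 (-1)) (sgeo q p (smono 1 (-1)))"
  unfolding sinv1_def u1_eq ..

lemma sinv2_eq: "sinv2 q p = smul q p (sgeo q p (smono (-1) 1)) (smono (-1) 0)"
  unfolding sinv2_def v2_eq ..

lemma G1_X: "smul q p (sgeo q p (smono 1 (-1))) sX = smono 0 1"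
proof (intro ext)
  fix k l a b
  show "smul q p (sgeo q p (smono 1 (-1))) sX k l a b = smono 0 1 k l a b"
    using geo_mul[of 1 "-1" 1 k l a b] by (simp add: sX_def)
qed

lemma cone1_G1: "cone1 0 (sgeo q p (smono 1 (-1)))"
  unfolding cone1_def
proof (intro allI impI)
  fix k l assume "sgeo q p (smono 1 (-1)) k l \<noteq> (\<lambda>a b. 0)"
  then obtain j where "k = int j * 1" "l = int j * (-1)" using sgeo_supp by blast
  then show "0 \<le> k \<and> k + l = 0" by simp
qed

lemma cone2_G2: "cone2 0 (sgeo q p (smono (-1) 1))"
  unfolding cone2_def
proof (intro allI impI)
  fix k l assume "sgeo q p (smono (-1) 1) k l \<noteq> (\<lambda>a b. 0)"
  then obtain j where "k = int j * (-1)" "l = int j * 1" using sgeo_supp by blast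
  then show "0 \<le> l \<and> k + l = 0" by simp
qed

lemma cone1_sinv1: "cone1 (-1) (sinv1 q p)"
  unfolding sinv1_eq using cone1_smul[OF cone1_smono[of 0 "-1"] cone1_G1] by simp

lemma cone2_sinv2: "cone2 (-1) (sinv2 q p)"
  unfolding sinv2_eq using cone2_smul[OF cone2_G2 cone2_smono[of 0 "-1"]] by simp

lemma sinv1_X:
  assumes gen: "generic_pt q p a b"
  shows "smul q p (sinv1 q p) sX k l a b = sone k l a b"
proof -
  have "smul q p (sinv1 q p) sX k l a b = smul q p (smono 0 (-1)) (smul q p (sgeo q p (smono 1 (-1))) sX) k l a b"
    unfolding sinv1_eq by (rule assoc_X[OF gen fin2_leftfin[where C = "{(0, -1)}"]]) (auto dest: smono_supp)
  then show ?thesis by (simp add: G1_X yinv_y)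
qed

lemma sinv2_X:
  assumes gen: "generic_pt q p a b"
  shows "smul q p (sinv2 q p) sX k l a b = sone k l a b"
proof -
  have "smul q p (sinv2 q p) sX k l a b = smul q p (sgeo q p (smono (-1) 1)) (smul q p (smono (-1) 0) sX) k l a b"
    unfolding sinv2_eq
    by (rule assoc_X[OF gen fin2_cone2[OF cone2_G2 cone2_smono[of 0 "-1"]]]) simp
  also have "\<dots> = smono 0 0 k l a b"
    unfolding xinv_X by (rule geo_mul) simp
  finally show ?thesis by (simp add: smono_def sone_def)
qed

lemma I_rec:
  assumes gen: "generic_pt q p a b"
  shows "spow q p (sinv1 q p) m k l a b = smul q p (spow q p (sinv1 q p) (Suc m)) sX k l a b"
proof -
  let ?I = "spow q p (sinv1 q p) m"
  have c: "cone1 (int m * -1) ?I" by (rule cone1_spow[OF cone1_sinv1])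
  have "smul q p (spow q p (sinv1 q p) (Suc m)) sX k l a b = smul q p ?I (smul q p (sinv1 q p) sX) k l a b"
    by (simp only: spow.simps) (rule assoc_X[OF gen fin2_cone1[OF c cone1_sinv1]])
  also have "\<dots> = smul q p ?I sone k l a b"
  proof (rule smul_cong_gen[OF gen])
    show "fin2 ?I (smul q p (sinv1 q p) sX)"
      using fin2_cone1[OF c cone1_smul[OF cone1_sinv1 cone1_sX]] .
    show "fin2 ?I sone" using fin2_cone1[OF c cone1_sone] .
    show "\<And>k l a b. generic_pt q p a b \<Longrightarrow> smul q p (sinv1 q p) sX k l a b = sone k l a b"
      by (rule sinv1_X)
  qed
  finally show ?thesis by (simp add: smul_sone)
qed

lemma J_rec:
  assumes gen: "generic_pt q p a b"
  shows "spow q p (sinv2 q p) m k l a b = smul q p (spow q p (sinv2 q p) (Suc m)) sX k l a b"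
proof -
  let ?I = "spow q p (sinv2 q p) m"
  have c: "cone2 (int m * -1) ?I" by (rule cone2_spow[OF cone2_sinv2])
  have "smul q p (spow q p (sinv2 q p) (Suc m)) sX k l a b = smul q p ?I (smul q p (sinv2 q p) sX) k l a b"
    by (simp only: spow.simps) (rule assoc_X[OF gen fin2_cone2[OF c cone2_sinv2]])
  also have "\<dots> = smul q p ?I sone k l a b"
  proof (rule smul_cong_gen[OF gen])
    show "fin2 ?I (smul q p (sinv2 q p) sX)"
      using fin2_cone2[OF c cone2_smul[OF cone2_sinv2 cone2_sX]] .
    show "fin2 ?I sone" using fin2_cone2[OF c cone2_sone] .
    show "\<And>k l a b. generic_pt q p a b \<Longrightarrow> smul q p (sinv2 q p) sX k l a b = sone k l a b"
      by (rule sinv2_X)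
  qed
  finally show ?thesis by (simp add: smul_sone)
qed

lemma sX_alt: "sadd (smono 1 0) (smono 0 1) = sX" by (simp add: sX_def)

lemma xy1_pos: "0 \<le> n \<Longrightarrow> xy_pow1 q p n = spow q p sX (nat n)"
  by (simp add: xy_pow1_def sX_alt)

lemma xy2_pos: "0 \<le> n \<Longrightarrow> xy_pow2 q p n = spow q p sX (nat n)"
  by (simp add: xy_pow2_def sX_alt)

lemma xy1_neg: "n \<le> 0 \<Longrightarrow> xy_pow1 q p n = spow q p (sinv1 q p) (nat (- n))"
  by (cases "n = 0") (simp_all add: xy_pow1_def)

lemma xy2_neg: "n \<le> 0 \<Longrightarrow> xy_pow2 q p n = spow q p (sinv2 q p) (nat (- n))"
  by (cases "n = 0") (simp_all add: xy_pow2_def)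

lemma cone1_xy1: "cone1 n (xy_pow1 q p n)"
proof (cases "0 \<le> n")
  case True
  then show ?thesis using cone1_spow[OF cone1_sX, of "nat n"] by (simp add: xy1_pos)
next
  case False
  then show ?thesis using cone1_spow[OF cone1_sinv1, of "nat (- n)"] by (simp add: xy1_neg)
qed

lemma cone2_xy2: "cone2 n (xy_pow2 q p n)"
proof (cases "0 \<le> n")
  case True
  then show ?thesis using cone2_spow[OF cone2_sX, of "nat n"] by (simp add: xy2_pos)
next
  case False
  then show ?thesis using cone2_spow[OF cone2_sinv2, of "nat (- n)"] by (simp add: xy2_neg)
qed

lemma cone1_zero: "cone1 N c \<Longrightarrow> \<not> (0 \<le> k \<and> k + l = N) \<Longrightarrow> c k l a b = 0"
  unfolding cone1_def by metis

lemma cone2_zero: "cone2 N c \<Longrightarrow> \<not> (0 \<le> l \<and> k + l = N) \<Longrightarrow> c k l a b = 0"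
  unfolding cone2_def by metis

lemma rec1:
  assumes gen: "generic_pt q p a b"
  shows "xy_pow1 q p (n + 1) i (n + 1 - i) a b = xy_pow1 q p n i (n - i) a b + xy_pow1 q p n (i - 1) (n + 1 - i) a b * eW a b q p i (n + 1 - i)"
proof (cases "0 \<le> n")
  case True
  have "xy_pow1 q p (n + 1) = smul q p (xy_pow1 q p n) sX"
    using True by (simp add: xy1_pos nat_add_distrib)
  then show ?thesis by (simp add: smul_X)
next
  case False
  let ?m = "nat (- (n + 1))"
  have e1: "xy_pow1 q p (n + 1) = spow q p (sinv1 q p) ?m" using False by (simp add: xy1_neg)
  have e2: "xy_pow1 q p n = spow q p (sinv1 q p) (Suc ?m)" using False xy1_neg[of n]
    by (simp add: Suc_nat_eq_nat_zadd1)
  show ?thesis unfolding e1 e2 I_rec[OF gen, of ?m] smul_X by simp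
qed

lemma rec2:
  assumes gen: "generic_pt q p a b"
  shows "xy_pow2 q p (n + 1) i (n + 1 - i) a b = xy_pow2 q p n i (n - i) a b + xy_pow2 q p n (i - 1) (n + 1 - i) a b * eW a b q p i (n + 1 - i)"
proof (cases "0 \<le> n")
  case True
  have "xy_pow2 q p (n + 1) = smul q p (xy_pow2 q p n) sX"
    using True by (simp add: xy2_pos nat_add_distrib)
  then show ?thesis by (simp add: smul_X)
next
  case False
  let ?m = "nat (- (n + 1))"
  have e1: "xy_pow2 q p (n + 1) = spow q p (sinv2 q p) ?m" using False by (simp add: xy2_neg)
  have e2: "xy_pow2 q p n = spow q p (sinv2 q p) (Suc ?m)" using False xy2_neg[of n]
    by (simp add: Suc_nat_eq_nat_zadd1)
  show ?thesis unfolding e1 e2 J_rec[OF gen, of ?m] smul_X by simp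
qed

lemma xy1_n0:
  assumes gen: "generic_pt q p a b"
  shows "xy_pow1 q p n 0 n a b = 1"
proof (induction n rule: int_induct[where k = 0])
  case base
  then show ?case by (simp add: xy_pow1_def sone_def)
next
  case (step1 i)
  have z: "xy_pow1 q p i (-1) (i + 1) a b = 0" by (rule cone1_zero[OF cone1_xy1]) simp
  show ?case using rec1[OF gen, of i 0] z step1(2) by simp
next
  case (step2 i)
  have z: "xy_pow1 q p (i - 1) (-1) i a b = 0" by (rule cone1_zero[OF cone1_xy1]) simp
  show ?case using rec1[OF gen, of "i - 1" 0] z step2(2) by simp
qed

lemma xy2_nn:
  assumes gen: "generic_pt q p a b"
  shows "xy_pow2 q p n n 0 a b = 1"
proof (induction n rule: int_induct[where k = 0])
  case base
  then show ?case by (simp add: xy_pow2_def sone_def)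
next
  case (step1 i)
  have z: "xy_pow2 q p i (i + 1) (-1) a b = 0" by (rule cone2_zero[OF cone2_xy2]) simp
  show ?case using rec2[OF gen, of i "i + 1"] z step1(2) by simp
next
  case (step2 i)
  have z: "xy_pow2 q p (i - 1) i (-1) a b = 0" by (rule cone2_zero[OF cone2_xy2]) simp
  show ?case using rec2[OF gen, of "i - 1" i] z step2(2) by simp
qed

lemma ebinom_unique:
  assumes gen: "generic_pt q p a b" and C: "is_ebinom a b q p C" and D: "is_ebinom a b q p D"
  shows "C = D"
proof -
  define Z where "Z = (\<lambda>n k. C n k - D n k)"
  have W: "\<And>k t. eW a b q p k t \<noteq> 0" using eW_nz[OF gen] by blast
  have Z0: "\<And>n. Z n 0 = 0" and Zn: "\<And>n. Z n n = 0"
    using C D unfolding is_ebinom_def Z_def by auto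
  have ZR: "\<And>n k. (n + 1, k) \<noteq> (0, 0) \<Longrightarrow> Z (n + 1) k = Z n k + Z n (k - 1) * eW a b q p k (n + 1 - k)"
    using C D unfolding is_ebinom_def Z_def by (auto simp: algebra_simps)
  have ZR': "Z n (k - 1) = 0" if "(n + 1, k) \<noteq> (0, 0)" "Z (n + 1) k = 0" "Z n k = 0" for n k
    using ZR[OF that(1)] that(2,3) W by simp
  have A: "Z n (n + int j) = 0" for n j
  proof (induction j arbitrary: n)
    case 0 then show ?case using Zn by simp
  next
    case (Suc j)
    show ?case
    proof (cases "n = -1 \<and> j = 0")
      case True then show ?thesis using Z0 by simp
    next
      case False
      have "Z (n + 1) (n + 1 + int j) = Z n (n + 1 + int j) + Z n (n + 1 + int j - 1) * eW a b q p (n + 1 + int j) (n + 1 - (n + 1 + int j))"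
        by (rule ZR) (use False in auto)
      then show ?thesis using Suc.IH[of "n + 1"] Suc.IH[of n] by (simp add: algebra_simps)
    qed
  qed
  have B1: "Z n (- int j) = 0" if "0 \<le> n" for n j
    using that
  proof (induction j arbitrary: n)
    case 0 then show ?case using Z0 by simp
  next
    case (Suc j)
    have "Z n (- int j - 1) = 0"
      by (rule ZR') (use Suc in auto)
    moreover have eq: "- int (Suc j) = - int j - 1" by simp
    ultimately show ?case by (simp only: eq)
  qed
  have B2: "Z (int m) k = 0" for m k
  proof (induction m arbitrary: k)
    case 0
    show ?case
    proof (cases "0 \<le> k")
      case True then show ?thesis using A[of 0 "nat k"] by simp
    next
      case False then show ?thesis using B1[of 0 "nat (- k)"] by simp
    qed
  next
    case (Suc m)
    have "Z (int m + 1) k = Z (int m) k + Z (int m) (k - 1) * eW a b q p k (int m + 1 - k)"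
      by (rule ZR) simp
    then show ?case using Suc.IH by (simp add: add.commute)
  qed
  have Cn: "Z (- int m) k = 0" for m k
  proof (induction m arbitrary: k)
    case 0 then show ?case using B2[of 0] by simp
  next
    case (Suc m)
    define n where "n = - int (Suc m)"
    have up: "Z (n + 1) k' = 0" for k' using Suc.IH unfolding n_def by simp
    have down: "Z n (n - int j) = 0" for j
    proof (induction j)
      case 0 then show ?case using Zn by simp
    next
      case (Suc j)
      have "Z n (n - int j - 1) = 0"
        by (rule ZR') (use Suc up n_def in auto)
      then show ?case by (simp add: algebra_simps)
    qed
    have "Z n k = 0"
    proof (cases "n \<le> k")
      case True then show ?thesis using A[of n "nat (k - n)"] by simp
    next
      case False then show ?thesis using down[of "nat (n - k)"] by simp
    qed
    then show ?case unfolding n_def .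
  qed
  have "Z n k = 0" for n k
  proof (cases "0 \<le> n")
    case True then show ?thesis using B2[of "nat n" k] by simp
  next
    case False then show ?thesis using Cn[of "nat (- n)" k] by simp
  qed
  then show ?thesis unfolding Z_def by (auto simp: fun_eq_iff)
qed

lemma xy12: "0 \<le> n \<Longrightarrow> xy_pow1 q p n = xy_pow2 q p n"
  by (simp add: xy1_pos xy2_pos)

lemma is_ebinom_coeff:
  assumes gen: "generic_pt q p a b"
  shows "is_ebinom a b q p (\<lambda>n k. xy_coeff q p n k a b)"
  unfolding is_ebinom_def
proof (intro conjI allI impI)
  fix n
  show "xy_coeff q p n 0 a b = 1" using xy1_n0[OF gen] by (simp add: xy_coeff_def)
  show "xy_coeff q p n n a b = 1"
  proof (cases "0 \<le> n")
    case True then show ?thesis using xy2_nn[OF gen, of n] xy12[OF True] by (simp add: xy_coeff_def)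
  next
    case False then show ?thesis using xy2_nn[OF gen, of n] by (simp add: xy_coeff_def)
  qed
next
  fix n k :: int
  assume nk: "(n + 1, k) \<noteq> (0, 0)"
  consider "1 \<le> k" | "k \<le> -1" | "k = 0" by linarith
  then show "xy_coeff q p (n + 1) k a b = xy_coeff q p n k a b + xy_coeff q p n (k - 1) a b * eW a b q p k (n + 1 - k)"
  proof cases
    case 1
    then show ?thesis using rec1[OF gen, of n k] by (simp add: xy_coeff_def algebra_simps)
  next
    case 2
    then show ?thesis using rec2[OF gen, of n k] by (simp add: xy_coeff_def algebra_simps)
  next
    case 3
    have z: "xy_pow2 q p n (-1) (n + 1) a b = 0"
    proof (cases "0 \<le> n")
      case True
      have "xy_pow1 q p n (-1) (n + 1) a b = 0" by (rule cone1_zero[OF cone1_xy1]) simp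
      then show ?thesis using xy12[OF True] by simp
    next
      case False
      then have "n \<noteq> -1 \<Longrightarrow> n + 1 < 0" by linarith
      then have "n + 1 < 0" using nk 3 by auto
      then show ?thesis by (intro cone2_zero[OF cone2_xy2]) simp
    qed
    show ?thesis using 3 z xy1_n0[OF gen, of n] xy1_n0[OF gen, of "n + 1"] by (simp add: xy_coeff_def)
  qed
qed

lemma ebinom_eq:
  assumes gen: "generic_pt q p a b"
  shows "ebinom a b q p = (\<lambda>n k. xy_coeff q p n k a b)"
  unfolding ebinom_def
proof (rule the_equality)
  show "is_ebinom a b q p (\<lambda>n k. xy_coeff q p n k a b)" by (rule is_ebinom_coeff[OF gen])
next
  fix C assume "is_ebinom a b q p C"
  then show "C = (\<lambda>n k. xy_coeff q p n k a b)" by (rule ebinom_unique[OF gen _ is_ebinom_coeff[OF gen]])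
qed

end

theorem theorem8:
  fixes q p a b :: complex and n k :: int
  assumes "norm p < 1" and "q \<noteq> 0" and "generic_pt q p a b"
  shows "xy_coeff q p n k a b = ebinom a b q p n k
    \<and> (\<forall>i j. xy_pow1 q p n i j a b = (if 0 \<le> i \<and> i + j = n then ebinom a b q p n i else 0))
    \<and> (\<forall>i j. xy_pow2 q p n i j a b = (if i \<le> n \<and> i + j = n then ebinom a b q p n i else 0))"
proof (intro conjI allI)
  note E = ebinom_eq[OF assms(2) assms(3)]
  show "xy_coeff q p n k a b = ebinom a b q p n k" unfolding E ..
  fix i j
  show "xy_pow1 q p n i j a b = (if 0 \<le> i \<and> i + j = n then ebinom a b q p n i else 0)"
  proof (cases "0 \<le> i \<and> i + j = n")
    case True
    then have j: "j = n - i" by simp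
    show ?thesis using True unfolding E j by (simp add: xy_coeff_def)
  next
    case False
    have "xy_pow1 q p n i j a b = 0" by (rule cone1_zero[OF assms(2) cone1_xy1[OF assms(2)]]) (use False in simp)
    then show ?thesis using False by auto
  qed
next
  note E = ebinom_eq[OF assms(2) assms(3)]
  fix i j
  show "xy_pow2 q p n i j a b = (if i \<le> n \<and> i + j = n then ebinom a b q p n i else 0)"
  proof (cases "i \<le> n \<and> i + j = n")
    case True
    then have j: "j = n - i" by simp
    show ?thesis
    proof (cases "0 \<le> i")
      case True2: True
      then have "0 \<le> n" using True by simp
      then show ?thesis using True True2 j xy12[OF assms(2), of n] unfolding E by (simp add: xy_coeff_def)
    next
      case False
      then show ?thesis using True j unfolding E by (simp add: xy_coeff_def)
    qed
  next
    case False
    then have "\<not> (0 \<le> j \<and> i + j = n)" by linarith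
    have "xy_pow2 q p n i j a b = 0" by (rule cone2_zero[OF assms(2) cone2_xy2[OF assms(2)]]) fact
    then show ?thesis using False by auto
  qed
qed

end
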